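(* In the setting and notation described in the context, let $c\in G_n/\!/K_n$ and $d\in G_k/\!/K_k$ with representatives $g\in G_n$, $h\in G_k$. Then $$B[c]*B[d]=\sum_{\lambda\in\mathrm{PB}(J_k,J_n)} B\big[\,\overline{\overline{g\circledast_\lambda h}}\,\big].$$
   Context: Let $I$ be a finite set, $X$ a finite or countable set, $V=X\sqcup(I\times\mathbb{N})$, $V_n=X\sqcup(I\times J_n)$ with $J_n=\{1,\dots,n\}$. $S_\infty$ (finitely supported permutations of $\mathbb{N}$) acts on $V$ by $\sigma(i,m)=(i,\sigma(m))$ on $I\times\mathbb{N}$ and trivially on $X$; $S_n\subset S_\infty$ permutes $J_n$. $G_\infty$ is a subgroup of the group of finitely supported permutations of $V$ containing $S_\infty$; $G_n$ is the set of elements of $G_\infty$ fixing every point outside $V_n$; $K_n=S_n$; $G_n/\!/K_n$ is the set of orbits of $K_n$ on $G_n$ under conjugation, and $\overline{\overline{r}}$ denotes the class of $r$. Local bijections: a local bijection is a pair $((\omega,\Omega))$ where $\Omega=X\cup(I\times F)$ for a finite $F\subset\mathbb{N}$ and $\omega:\Omega\to\Omega$ is a bijection; $\tilde\omega$ denotes its extension to $V$ fixing all points outside $\Omega$. Their product is $((\omega,\Omega))\circ((\mu,M))=((\tilde\omega\tilde\mu|_{\Omega\cup M},\Omega\cup M))$. Consider formal series $\sum a_{((\omega,\Omega))}((\omega,\Omega))$ with complex coefficients, with convolution $\big(\sum a\,((\omega,\Omega))\big)*\big(\sum b\,((\mu,M))\big)=\sum c_{((\nu,N))}((\nu,N))$,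 $c_{((\nu,N))}=\sum a_{((\omega,\Omega))}b_{((\mu,M))}$ over pairs with $\Omega\cup M=N$ and $\tilde\omega\tilde\mu=\tilde\nu$ (these sums are finite for the products below). For an injective map $\sigma:J_n\to\mathbb{N}$, extend it to the bijection $V_n\to X\cup(I\times\sigma(J_n))$, $(i,m)\mapsto(i,\sigma(m))$, identity on $X$; for $g\in G_n$ write $\sigma((g,V_n))\sigma^{-1}=((\sigma g\sigma^{-1},X\cup(I\times\sigma(J_n))))$. For $c\in G_n/\!/K_n$ with representative $g$ define $B[c]=\sum_{\Omega\subset\mathbb{N},\,\#\Omega=n}\ \sum_{\sigma:J_n\to\Omega\text{ bijective}}\sigma((g,V_n))\sigma^{-1}$ (independent of the representative). A partial bijection $Y\to Z$ is a bijection between a subset $\mathrm{dom}\,\lambda\subseteq Y$ and a subset $\mathrm{im}\,\lambda\subseteq Z$ (empty allowed), $\mathrm{rk}\,\lambda=\#\mathrm{dom}\,\lambda$; $\mathrm{PB}(Y,Z)$ is the set of them; composition: $w\in\mathrm{dom}(\lambda\mu)$ iff $w\in\mathrm{dom}\,\mu$ and $\mu(w)\in\mathrm{dom}\,\lambda$, then $\lambda\mu(w)=\lambda(\mu(w))$. Injective maps and their inverses are viewed as partial bijections. For $g\in G_n$, $h\in G_k$ and $\lambda\in\mathrm{PB}(J_k,J_n)$ of rank $d$, choose injective maps $\sigma_0:J_n\to J_{n+k-d}$, $\tau_0:J_k\to J_{n+k-d}$ with $\sigma_0^{-1}\tau_0=\lambda$ as partial bijections, and let $\overline{\overline{g\circledast_\lambda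 h}}\in G_{n+k-d}/\!/K_{n+k-d}$ be the class of the permutation $\tilde\nu$ where $((\nu,V_{n+k-d}))=\sigma_0((g,V_n))\sigma_0^{-1}\circ\tau_0((h,V_k))\tau_0^{-1}$; this class does not depend on the choice of $\sigma_0,\tau_0$. *)

theory Defs
  imports Complex_Main "HOL-Library.FuncSet" "HOL-Library.Countable_Set"
begin

text \<open>Points of V live in the type ('x + 'i * nat); X :: 'x set, I :: 'i set.
  The paper's natural numbers are {1,2,...} = {1..}; J_n = {1..n}.\<close>

type_synonym ('x,'i) pt = "'x + 'i \<times> nat"

definition Vset :: "'x set \<Rightarrow> 'i set \<Rightarrow> ('x,'i) pt set" where
  "Vset X I = Inl ` X \<union> Inr ` (I \<times> {1..})"

definition Omega :: "'x set \<Rightarrow> 'i set \<Rightarrow> nat set \<Rightarrow> ('x,'i) pt set" where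
  "Omega X I F = Inl ` X \<union> Inr ` (I \<times> F)"

definition Vn :: "'x set \<Rightarrow> 'i set \<Rightarrow> nat \<Rightarrow> ('x,'i) pt set" where
  "Vn X I n = Omega X I {1..n}"

definition fperm :: "'x set \<Rightarrow> 'i set \<Rightarrow> (('x,'i) pt \<Rightarrow> ('x,'i) pt) \<Rightarrow> bool" where
  "fperm X I f \<longleftrightarrow> bij f \<and> finite {v. f v \<noteq> v} \<and> (\<forall>v. v \<notin> Vset X I \<longrightarrow> f v = v)"

text \<open>finitely supported permutations of the paper's N = {1..} (0 is a dummy point, fixed)\<close>
definition S_inf :: "(nat \<Rightarrow> nat) set" where
  "S_inf = {\<sigma>. bij \<sigma> \<and> finite {m. \<sigma> m \<noteq> m} \<and> \<sigma> 0 = 0}"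

definition liftS :: "'i set \<Rightarrow> (nat \<Rightarrow> nat) \<Rightarrow> ('x,'i) pt \<Rightarrow> ('x,'i) pt" where
  "liftS I \<sigma> v = (case v of Inl x \<Rightarrow> Inl x
                    | Inr (i,m) \<Rightarrow> (if i \<in> I then Inr (i, \<sigma> m) else Inr (i,m)))"

definition admissible :: "'x set \<Rightarrow> 'i set \<Rightarrow> (('x,'i) pt \<Rightarrow> ('x,'i) pt) set \<Rightarrow> bool" where
  "admissible X I G \<longleftrightarrow> G \<subseteq> {f. fperm X I f} \<and> id \<in> G \<and>
     (\<forall>f\<in>G. \<forall>g\<in>G. f \<circ> g \<in> G) \<and> (\<forall>f\<in>G. inv f \<in> G) \<and> liftS I ` S_inf \<subseteq> G"

definition Gn :: "'x set \<Rightarrow> 'i set \<Rightarrow> (('x,'i) pt \<Rightarrow> ('x,'i) pt) set \<Rightarrow> nat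
     \<Rightarrow> (('x,'i) pt \<Rightarrow> ('x,'i) pt) set" where
  "Gn X I G n = {g \<in> G. \<forall>v. v \<notin> Vn X I n \<longrightarrow> g v = v}"

definition Kn :: "'i set \<Rightarrow> nat \<Rightarrow> (('x,'i) pt \<Rightarrow> ('x,'i) pt) set" where
  "Kn I n = liftS I ` {\<sigma> \<in> S_inf. \<forall>m. m \<notin> {1..n} \<longrightarrow> \<sigma> m = m}"

definition cls :: "'i set \<Rightarrow> nat \<Rightarrow> (('x,'i) pt \<Rightarrow> ('x,'i) pt) \<Rightarrow> (('x,'i) pt \<Rightarrow> ('x,'i) pt) set" where
  "cls I n g = {\<kappa> \<circ> g \<circ> inv \<kappa> | \<kappa>. \<kappa> \<in> Kn I n}"

definition quotGK :: "'x set \<Rightarrow> 'i set \<Rightarrow> (('x,'i) pt \<Rightarrow> ('x,'i) pt) set \<Rightarrow> nat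
     \<Rightarrow> (('x,'i) pt \<Rightarrow> ('x,'i) pt) set set" where
  "quotGK X I G n = cls I n ` Gn X I G n"

text \<open>A local bijection ((omega,Omega)) with Omega = X \<union> I \<times> F is encoded as the pair
  (F, omega~), where omega~ is the extension of omega to the whole type by the identity.\<close>
type_synonym ('x,'i) lb = "nat set \<times> (('x,'i) pt \<Rightarrow> ('x,'i) pt)"

type_synonym ('x,'i) fser = "('x,'i) lb \<Rightarrow> complex"

definition conv :: "('x,'i) fser \<Rightarrow> ('x,'i) fser \<Rightarrow> ('x,'i) fser" where
  "conv a b = (\<lambda>(N,\<nu>). \<Sum>(p,q) \<in> {(p,q). a p \<noteq> 0 \<and> b q \<noteq> 0 \<and> fst p \<union> fst q = N \<and> snd p \<circ> snd q = \<nu>}.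
                 a p * b q)"

definition liftP :: "(nat \<Rightarrow> nat) \<Rightarrow> ('x,'i) pt \<Rightarrow> ('x,'i) pt" where
  "liftP \<sigma> v = (case v of Inl x \<Rightarrow> Inl x | Inr (i,m) \<Rightarrow> Inr (i, \<sigma> m))"

text \<open>\<sigma> ((g,V_n)) \<sigma>^{-1}, for \<sigma> injective on J_n\<close>
definition conj_lb :: "'x set \<Rightarrow> 'i set \<Rightarrow> nat \<Rightarrow> (nat \<Rightarrow> nat) \<Rightarrow> (('x,'i) pt \<Rightarrow> ('x,'i) pt) \<Rightarrow> ('x,'i) lb" where
  "conj_lb X I n \<sigma> g = (\<sigma> ` {1..n},
     (\<lambda>v. if v \<in> Omega X I (\<sigma> ` {1..n})
          then liftP \<sigma> (g (liftP (the_inv_into {1..n} \<sigma>) v)) else v))"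

text \<open>B for a representative g: sum over all injective \<sigma> : J_n \<rightarrow> N
  (i.e. over all \<Omega> with #\<Omega> = n and bijections J_n \<rightarrow> \<Omega>)\<close>
definition Bser :: "'x set \<Rightarrow> 'i set \<Rightarrow> nat \<Rightarrow> (('x,'i) pt \<Rightarrow> ('x,'i) pt) \<Rightarrow> ('x,'i) fser" where
  "Bser X I n g = (\<lambda>l. of_nat (card {\<sigma> \<in> {1..n} \<rightarrow>\<^sub>E {1..}. inj_on \<sigma> {1..n} \<and> conj_lb X I n \<sigma> g = l}))"

definition Bcls :: "'x set \<Rightarrow> 'i set \<Rightarrow> nat \<Rightarrow> (('x,'i) pt \<Rightarrow> ('x,'i) pt) set \<Rightarrow> ('x,'i) fser" where
  "Bcls X I n c = Bser X I n (SOME g. g \<in> c)"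

definition PB :: "nat \<Rightarrow> nat \<Rightarrow> (nat \<rightharpoonup> nat) set" where
  "PB k n = {L. dom L \<subseteq> {1..k} \<and> ran L \<subseteq> {1..n} \<and> inj_on L (dom L)}"

definition rk :: "(nat \<rightharpoonup> nat) \<Rightarrow> nat" where
  "rk L = card (dom L)"

definition pb_of :: "nat \<Rightarrow> (nat \<Rightarrow> nat) \<Rightarrow> (nat \<rightharpoonup> nat)" where
  "pb_of n \<sigma> = (\<lambda>w. if w \<in> {1..n} then Some (\<sigma> w) else None)"

definition pb_inv :: "(nat \<rightharpoonup> nat) \<Rightarrow> (nat \<rightharpoonup> nat)" where
  "pb_inv L = (\<lambda>z. if z \<in> ran L then Some (THE w. L w = Some z) else None)"

text \<open>the class of g \<circledast>_\<lambda> h in G_{n+k-d}//K_{n+k-d} (composition of partial bijections = map_comp)\<close>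
definition star_cls :: "'i set \<Rightarrow> 'x set \<Rightarrow> nat \<Rightarrow> nat \<Rightarrow> (('x,'i) pt \<Rightarrow> ('x,'i) pt)
     \<Rightarrow> (('x,'i) pt \<Rightarrow> ('x,'i) pt) \<Rightarrow> (nat \<rightharpoonup> nat) \<Rightarrow> (('x,'i) pt \<Rightarrow> ('x,'i) pt) set" where
  "star_cls I X n k g h L =
     (let m = n + k - rk L;
          st = (SOME (\<sigma>0, \<tau>0). \<sigma>0 \<in> {1..n} \<rightarrow>\<^sub>E {1..m} \<and> inj_on \<sigma>0 {1..n} \<and>
                               \<tau>0 \<in> {1..k} \<rightarrow>\<^sub>E {1..m} \<and> inj_on \<tau>0 {1..k} \<and>
                               pb_inv (pb_of n \<sigma>0) \<circ>\<^sub>m pb_of k \<tau>0 = L)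
      in cls I m (snd (conj_lb X I n (fst st) g) \<circ> snd (conj_lb X I k (snd st) h)))"

end

theory Submission
  imports Defs
begin


lemma card_fib:
  assumes "finite S" "finite T" "g ` S \<subseteq> T"
  shows "card S = (\<Sum>y\<in>T. card {x\<in>S. g x = y})"
  using sum.group[OF assms, of "\<lambda>_. 1::nat"] by simp

lemma Omega_Inl[simp]: "Inl x \<in> Omega X I F \<longleftrightarrow> x \<in> X" by (auto simp: Omega_def)
lemma Omega_Inr[simp]: "Inr (i,a) \<in> Omega X I F \<longleftrightarrow> i \<in> I \<and> a \<in> F" by (auto simp: Omega_def)
lemma liftP_Inl[simp]: "liftP \<sigma> (Inl x) = Inl x" by (simp add: liftP_def)
lemma liftP_Inr[simp]: "liftP \<sigma> (Inr (i,a)) = Inr (i, \<sigma> a)" by (simp add: liftP_def)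
lemma liftS_Inl[simp]: "liftS I \<sigma> (Inl x) = Inl x" by (simp add: liftS_def)
lemma liftS_Inr[simp]: "liftS I \<sigma> (Inr (i,a)) = (if i \<in> I then Inr (i, \<sigma> a) else Inr (i,a))" by (simp add: liftS_def)

lemma pt_cases: obtains x where "v = Inl x" | i a where "v = Inr (i,a)"
  by (cases v) auto

definition Inj :: "nat \<Rightarrow> (nat \<Rightarrow> nat) set" where
  "Inj m = {\<sigma> \<in> {1..m} \<rightarrow>\<^sub>E {1..}. inj_on \<sigma> {1..m}}"

definition T :: "'x set \<Rightarrow> 'i set \<Rightarrow> nat \<Rightarrow> (nat \<Rightarrow> nat) \<Rightarrow> (('x,'i) pt \<Rightarrow> ('x,'i) pt) \<Rightarrow> ('x,'i) pt \<Rightarrow> ('x,'i) pt" where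
  "T X I m \<sigma> f = snd (conj_lb X I m \<sigma> f)"

definition goodS :: "('x,'i) pt set \<Rightarrow> (('x,'i) pt \<Rightarrow> ('x,'i) pt) \<Rightarrow> bool" where
  "goodS A f \<longleftrightarrow> (\<forall>v. v \<notin> A \<longrightarrow> f v = v) \<and> (\<forall>v\<in>A. f v \<in> A)"

lemma T_eq: "T X I m \<sigma> f v = (if v \<in> Omega X I (\<sigma>`{1..m})
          then liftP \<sigma> (f (liftP (the_inv_into {1..m} \<sigma>) v)) else v)"
  by (simp add: T_def conj_lb_def)

lemma conj_lb_eq: "conj_lb X I m \<sigma> f = (\<sigma>`{1..m}, T X I m \<sigma> f)"
  by (simp add: T_def conj_lb_def)

lemma liftP_inv_liftP:
  assumes "inj_on \<sigma> F" "v \<in> Omega X I F"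
  shows "liftP (the_inv_into F \<sigma>) (liftP \<sigma> v) = v"
  using assms by (cases v rule: pt_cases) (auto simp: the_inv_into_f_f)

lemma liftP_liftP_inv:
  assumes "inj_on \<sigma> F" "v \<in> Omega X I (\<sigma>`F)"
  shows "liftP \<sigma> (liftP (the_inv_into F \<sigma>) v) = v"
  using assms by (cases v rule: pt_cases) (auto simp: f_the_inv_into_f)

lemma liftP_in:
  assumes "v \<in> Omega X I F"
  shows "liftP \<sigma> v \<in> Omega X I (\<sigma>`F)"
  using assms by (cases v rule: pt_cases) auto

lemma liftP_inv_in:
  assumes "inj_on \<sigma> F" "v \<in> Omega X I (\<sigma>`F)"
  shows "liftP (the_inv_into F \<sigma>) v \<in> Omega X I F"
  using assms by (cases v rule: pt_cases) (auto simp: the_inv_into_f_f)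

lemma Omega_mono: "F \<subseteq> F' \<Longrightarrow> Omega X I F \<subseteq> Omega X I F'"
  by (auto simp: Omega_def)

lemma goodS_mono: "goodS A f \<Longrightarrow> A \<subseteq> B \<Longrightarrow> goodS B f"
  unfolding goodS_def by (metis subsetD)

lemma goodS_comp: "goodS A f \<Longrightarrow> goodS A g \<Longrightarrow> goodS A (f \<circ> g)"
  unfolding goodS_def by auto

lemma goodS_T:
  assumes "goodS (Omega X I {1..m}) f" "inj_on \<sigma> {1..m}"
  shows "goodS (Omega X I (\<sigma>`{1..m})) (T X I m \<sigma> f)"
  unfolding goodS_def
proof (intro conjI allI impI ballI)
  fix v assume "v \<notin> Omega X I (\<sigma> ` {1..m})" then show "T X I m \<sigma> f v = v" by (simp add: T_eq)
next
  fix v assume v: "v \<in> Omega X I (\<sigma> ` {1..m})"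
  have "liftP (the_inv_into {1..m} \<sigma>) v \<in> Omega X I {1..m}" using liftP_inv_in[OF assms(2) v] .
  then have "f (liftP (the_inv_into {1..m} \<sigma>) v) \<in> Omega X I {1..m}" using assms(1) by (auto simp: goodS_def)
  then show "T X I m \<sigma> f v \<in> Omega X I (\<sigma> ` {1..m})" using v by (simp add: T_eq liftP_in)
qed

lemma T_comp:
  assumes "goodS (Omega X I {1..m}) a" "goodS (Omega X I {1..m}) b" "inj_on \<sigma> {1..m}"
  shows "T X I m \<sigma> (a \<circ> b) = T X I m \<sigma> a \<circ> T X I m \<sigma> b"
proof
  fix v
  show "T X I m \<sigma> (a \<circ> b) v = (T X I m \<sigma> a \<circ> T X I m \<sigma> b) v"
  proof (cases "v \<in> Omega X I (\<sigma>`{1..m})")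
    case True
    let ?w = "b (liftP (the_inv_into {1..m} \<sigma>) v)"
    have "?w \<in> Omega X I {1..m}" using liftP_inv_in[OF assms(3) True] assms(2) by (auto simp: goodS_def)
    have inT: "liftP \<sigma> ?w \<in> Omega X I (\<sigma>`{1..m})" using liftP_in[of ?w] \<open>?w \<in> _\<close> by blast
    have "liftP (the_inv_into {1..m} \<sigma>) (liftP \<sigma> ?w) = ?w" using liftP_inv_liftP[OF assms(3) \<open>?w \<in> _\<close>] .
    then show ?thesis using True inT by (simp add: T_eq)
  next
    case False then show ?thesis by (simp add: T_eq)
  qed
qed

lemma T_cong:
  assumes "goodS (Omega X I {1..m}) f" "inj_on \<sigma> {1..m}" "\<And>a. a \<in> {1..m} \<Longrightarrow> \<sigma> a = \<sigma>' a"
  shows "T X I m \<sigma> f = T X I m \<sigma>' f"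
proof
  fix v
  have img: "\<sigma>`{1..m} = \<sigma>'`{1..m}" using assms(3) by (auto simp: image_def)
  have inj': "inj_on \<sigma>' {1..m}" using assms(2,3) inj_on_cong by blast
  show "T X I m \<sigma> f v = T X I m \<sigma>' f v"
  proof (cases "v \<in> Omega X I (\<sigma>`{1..m})")
    case True
    have e: "liftP (the_inv_into {1..m} \<sigma>) v = liftP (the_inv_into {1..m} \<sigma>') v"
    proof (cases v rule: pt_cases)
      case (2 i a)
      then obtain x where x: "x \<in> {1..m}" "a = \<sigma> x" using True by auto
      have "the_inv_into {1..m} \<sigma> a = x" using x assms(2) by (simp add: the_inv_into_f_f)
      moreover have "the_inv_into {1..m} \<sigma>' a = x" using x assms(3)[OF x(1)] inj' by (simp add: the_inv_into_f_f)
      ultimately show ?thesis using 2 by simp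
    qed simp
    let ?w = "f (liftP (the_inv_into {1..m} \<sigma>) v)"
    have "?w \<in> Omega X I {1..m}" using liftP_inv_in[OF assms(2) True] assms(1) by (auto simp: goodS_def)
    then have "liftP \<sigma> ?w = liftP \<sigma>' ?w" using assms(3) by (cases ?w rule: pt_cases) auto
    then show ?thesis using True img e by (simp add: T_eq)
  next
    case False then show ?thesis using img by (simp add: T_eq)
  qed
qed



lemma T_T:
  assumes "goodS (Omega X I {1..m}) f" "inj_on \<rho> {1..m}" "\<rho>`{1..m} \<subseteq> {1..M}" "inj_on \<sigma> {1..M}"
  shows "T X I M \<sigma> (T X I m \<rho> f) = T X I m (\<sigma> \<circ> \<rho>) f"
proof
  fix v
  have injc: "inj_on (\<sigma> \<circ> \<rho>) {1..m}"
    using assms(2) inj_on_subset[OF assms(4) assms(3)] by (rule comp_inj_on)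
  have sub: "(\<sigma>\<circ>\<rho>)`{1..m} \<subseteq> \<sigma>`{1..M}" using assms(3) by (auto simp: image_comp[symmetric])
  show "T X I M \<sigma> (T X I m \<rho> f) v = T X I m (\<sigma> \<circ> \<rho>) f v"
  proof (cases "v \<in> Omega X I ((\<sigma>\<circ>\<rho>)`{1..m})")
    case True
    define w where "w = liftP (the_inv_into {1..m} (\<sigma>\<circ>\<rho>)) v"
    have w1: "w \<in> Omega X I {1..m}" unfolding w_def by (rule liftP_inv_in[OF injc True])
    have w2: "v = liftP (\<sigma>\<circ>\<rho>) w" unfolding w_def by (rule liftP_liftP_inv[OF injc True, symmetric])
    have vM: "v \<in> Omega X I (\<sigma>`{1..M})" using True Omega_mono[OF sub] by blast
    have u: "liftP (the_inv_into {1..M} \<sigma>) v = liftP \<rho> w"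
    proof (cases w rule: pt_cases)
      case (2 i a)
      then have a: "a \<in> {1..m}" using w1 by simp
      then have "\<rho> a \<in> {1..M}" using assms(3) by blast
      then have "the_inv_into {1..M} \<sigma> (\<sigma> (\<rho> a)) = \<rho> a" using assms(4) by (simp add: the_inv_into_f_f)
      then show ?thesis using 2 w2 by simp
    qed (use w2 in simp)
    have uin: "liftP \<rho> w \<in> Omega X I (\<rho>`{1..m})" by (rule liftP_in[OF w1])
    have u2: "liftP (the_inv_into {1..m} \<rho>) (liftP \<rho> w) = w" by (rule liftP_inv_liftP[OF assms(2) w1])
    have fw: "f w \<in> Omega X I {1..m}" using w1 assms(1) by (auto simp: goodS_def)
    have c: "liftP \<sigma> (liftP \<rho> (f w)) = liftP (\<sigma> \<circ> \<rho>) (f w)" by (cases "f w" rule: pt_cases) auto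
    have "T X I M \<sigma> (T X I m \<rho> f) v = liftP \<sigma> (T X I m \<rho> f (liftP \<rho> w))"
      using vM u by (simp add: T_eq[of X I M])
    also have "\<dots> = liftP \<sigma> (liftP \<rho> (f w))" using uin u2 by (simp add: T_eq[of X I m])
    also have "\<dots> = T X I m (\<sigma> \<circ> \<rho>) f v" using c True by (simp add: T_eq[of X I m] w_def)
    finally show ?thesis .
  next
    case False
    show ?thesis
    proof (cases "v \<in> Omega X I (\<sigma>`{1..M})")
      case True
      define w where "w = liftP (the_inv_into {1..M} \<sigma>) v"
      have w1: "w \<in> Omega X I {1..M}" unfolding w_def by (rule liftP_inv_in[OF assms(4) True])
      have w2: "v = liftP \<sigma> w" unfolding w_def by (rule liftP_liftP_inv[OF assms(4) True, symmetric])
      have wn: "w \<notin> Omega X I (\<rho>`{1..m})"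
      proof
        assume "w \<in> Omega X I (\<rho>`{1..m})"
        then have "v \<in> Omega X I (\<sigma>`\<rho>`{1..m})" using w2 liftP_in by blast
        then show False using False by (simp add: image_comp)
      qed
      have "T X I M \<sigma> (T X I m \<rho> f) v = liftP \<sigma> (T X I m \<rho> f w)"
        using True by (simp add: T_eq[of X I M] w_def)
      also have "\<dots> = v" using wn w2 by (simp add: T_eq[of X I m])
      also have "\<dots> = T X I m (\<sigma> \<circ> \<rho>) f v" using False by (simp add: T_eq[of X I m])
      finally show ?thesis .
    next
      case False2: False
      then show ?thesis using False by (simp add: T_eq)
    qed
  qed
qed



lemma liftS_eq_liftP: "v \<in> Omega X I F \<Longrightarrow> liftS I \<rho> v = liftP \<rho> v"
  by (cases v rule: pt_cases) auto

lemma Kn_T: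
  assumes adm: "admissible X I G" and gf: "goodS (Omega X I {1..m}) f" and k: "\<kappa> \<in> Kn I m"
  shows "\<exists>\<rho>. bij_betw \<rho> {1..m} {1..m} \<and> \<kappa> \<circ> f \<circ> inv \<kappa> = T X I m \<rho> f"
proof -
  obtain \<rho> where \<rho>: "\<rho> \<in> S_inf" "\<And>a. a \<notin> {1..m} \<Longrightarrow> \<rho> a = a" and kk: "\<kappa> = liftS I \<rho>"
    using k unfolding Kn_def by blast
  have "\<kappa> \<in> G" using adm \<rho>(1) kk unfolding admissible_def by blast
  then have bk: "bij \<kappa>" using adm unfolding admissible_def fperm_def by blast
  have bij\<rho>: "bij \<rho>" using \<rho>(1) by (simp add: S_inf_def)
  then have inj\<rho>: "inj_on \<rho> {1..m}" by (meson bij_def inj_on_subset subset_UNIV)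
  have sub: "\<rho>`{1..m} \<subseteq> {1..m}"
  proof
    fix b assume "b \<in> \<rho>`{1..m}"
    then obtain a where a: "a \<in> {1..m}" "b = \<rho> a" by blast
    show "b \<in> {1..m}"
    proof (rule ccontr)
      assume "b \<notin> {1..m}"
      then have "\<rho> b = b" using \<rho>(2) by blast
      then have "\<rho> b = \<rho> a" using a by simp
      then have "b = a" using bij\<rho> by (simp add: bij_def inj_eq)
      then show False using a \<open>b \<notin> _\<close> by simp
    qed
  qed
  have im: "\<rho>`{1..m} = {1..m}" using endo_inj_surj[OF _ sub inj\<rho>] by simp
  have bb: "bij_betw \<rho> {1..m} {1..m}" using inj\<rho> im by (simp add: bij_betw_def)
  have pw: "T X I m \<rho> f (\<kappa> v) = \<kappa> (f v)" for v
  proof (cases "v \<in> Omega X I {1..m}")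
    case True
    have kv: "\<kappa> v = liftP \<rho> v" using kk liftS_eq_liftP[OF True] by simp
    have fv: "f v \<in> Omega X I {1..m}" using gf True by (auto simp: goodS_def)
    have kfv: "\<kappa> (f v) = liftP \<rho> (f v)" using kk liftS_eq_liftP[OF fv] by simp
    have "liftP \<rho> v \<in> Omega X I (\<rho>`{1..m})" by (rule liftP_in[OF True])
    moreover have "liftP (the_inv_into {1..m} \<rho>) (liftP \<rho> v) = v" by (rule liftP_inv_liftP[OF inj\<rho> True])
    ultimately show ?thesis using kv kfv by (simp add: T_eq)
  next
    case False
    have kv: "\<kappa> v = v" using False \<rho>(2) kk by (cases v rule: pt_cases) auto
    have fv: "f v = v" using gf False by (auto simp: goodS_def)
    show ?thesis using kv fv False im by (simp add: T_eq)
  qed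
  have "\<kappa> \<circ> f \<circ> inv \<kappa> = T X I m \<rho> f"
  proof
    fix v
    have "(\<kappa> \<circ> f \<circ> inv \<kappa>) v = T X I m \<rho> f (\<kappa> (inv \<kappa> v))" using pw by simp
    also have "\<dots> = T X I m \<rho> f v" using bk by (simp add: bij_is_surj surj_f_inv_f)
    finally show "(\<kappa> \<circ> f \<circ> inv \<kappa>) v = T X I m \<rho> f v" .
  qed
  then show ?thesis using bb by blast
qed

lemma Bser_eq: "Bser X I m f l = of_nat (card {\<sigma>\<in>Inj m. (\<sigma>`{1..m}, T X I m \<sigma> f) = l})"
  unfolding Bser_def Inj_def conj_lb_eq by (rule arg_cong[where f="\<lambda>A. of_nat (card A)"]) auto

lemma Inj_memI: "\<sigma> \<in> extensional {1..m} \<Longrightarrow> (\<And>a. a \<in> {1..m} \<Longrightarrow> \<sigma> a \<in> {1..}) \<Longrightarrow> inj_on \<sigma> {1..m} \<Longrightarrow> \<sigma> \<in> Inj m"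
  unfolding Inj_def PiE_def Pi_def by blast

lemma Inj_memD: "\<sigma> \<in> Inj m \<Longrightarrow> \<sigma> \<in> extensional {1..m}"
  "\<sigma> \<in> Inj m \<Longrightarrow> a \<in> {1..m} \<Longrightarrow> \<sigma> a \<in> {1..}"
  "\<sigma> \<in> Inj m \<Longrightarrow> inj_on \<sigma> {1..m}"
  unfolding Inj_def PiE_def Pi_def by blast+

lemma Inj_reparam:
  assumes bb: "bij_betw \<rho> {1..m} {1..m}"
  shows "card {\<sigma>\<in>Inj m. P (restrict (\<sigma> \<circ> \<rho>) {1..m})} = card {\<sigma>\<in>Inj m. P \<sigma>}"
proof -
  let ?\<phi> = "\<lambda>\<sigma>. restrict (\<sigma> \<circ> \<rho>) {1..m}"
  have inj\<rho>: "inj_on \<rho> {1..m}" and im: "\<rho>`{1..m} = {1..m}" using bb by (auto simp: bij_betw_def)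
  have \<rho>in: "\<rho> a \<in> {1..m}" if "a \<in> {1..m}" for a using that im by blast
  have mapI: "?\<phi> \<sigma> \<in> Inj m" if "\<sigma> \<in> Inj m" for \<sigma>
  proof (rule Inj_memI)
    show "?\<phi> \<sigma> \<in> extensional {1..m}" by (rule restrict_extensional)
  next
    fix a assume a: "a \<in> {1..m}"
    have e: "?\<phi> \<sigma> a = \<sigma> (\<rho> a)" using a by (simp only: restrict_apply' comp_apply)
    show "?\<phi> \<sigma> a \<in> {1..}" unfolding e by (rule Inj_memD(2)[OF that \<rho>in[OF a]])
  next
    have i1: "inj_on \<sigma> (\<rho>`{1..m})" unfolding im by (rule Inj_memD(3)[OF that])
    have i2: "inj_on (\<sigma> \<circ> \<rho>) {1..m}" by (rule comp_inj_on[OF inj\<rho> i1])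
    show "inj_on (?\<phi> \<sigma>) {1..m}"
    proof (rule iffD2[OF inj_on_cong i2])
      fix a assume "a \<in> {1..m}"
      then show "?\<phi> \<sigma> a = (\<sigma> \<circ> \<rho>) a" by (rule restrict_apply')
    qed
  qed
  have injphi: "inj_on ?\<phi> (Inj m)"
  proof
    fix \<sigma> \<sigma>' assume s: "\<sigma> \<in> Inj m" "\<sigma>' \<in> Inj m" and e: "?\<phi> \<sigma> = ?\<phi> \<sigma>'"
    show "\<sigma> = \<sigma>'"
    proof (rule extensionalityI[OF Inj_memD(1)[OF s(1)] Inj_memD(1)[OF s(2)]])
      fix b assume "b \<in> {1..m}"
      then obtain a where a: "a \<in> {1..m}" "b = \<rho> a" using im by blast
      have "?\<phi> \<sigma> a = ?\<phi> \<sigma>' a" using e by simp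
      then show "\<sigma> b = \<sigma>' b" using a by simp
    qed
  qed
  have surj: "\<tau> \<in> ?\<phi> ` {\<sigma>\<in>Inj m. P (?\<phi> \<sigma>)}" if "\<tau> \<in> Inj m" "P \<tau>" for \<tau>
  proof -
    define \<sigma> where "\<sigma> = restrict (\<tau> \<circ> the_inv_into {1..m} \<rho>) {1..m}"
    have ti: "the_inv_into {1..m} \<rho> b \<in> {1..m}" if "b \<in> {1..m}" for b
      using the_inv_into_into[OF inj\<rho>, of b "{1..m}"] that im by simp
    have ti2: "\<rho> (the_inv_into {1..m} \<rho> b) = b" if "b \<in> {1..m}" for b
      using f_the_inv_into_f[OF inj\<rho>, of b] that im by simp
    have pa: "?\<phi> \<sigma> a = \<tau> a" if a: "a \<in> {1..m}" for a
    proof -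
      have "the_inv_into {1..m} \<rho> (\<rho> a) = a" by (rule the_inv_into_f_f[OF inj\<rho> a])
      then show ?thesis using a \<rho>in[OF a] by (simp add: \<sigma>_def)
    qed
    have ph: "?\<phi> \<sigma> = \<tau>"
      by (rule extensionalityI[OF restrict_extensional Inj_memD(1)[OF that(1)]]) (rule pa)
    have "\<sigma> \<in> Inj m"
    proof (rule Inj_memI)
      show "\<sigma> \<in> extensional {1..m}" unfolding \<sigma>_def by (rule restrict_extensional)
      fix b assume b: "b \<in> {1..m}"
      then have "\<sigma> b = \<tau> (the_inv_into {1..m} \<rho> b)" by (simp add: \<sigma>_def)
      then show "\<sigma> b \<in> {1..}" using Inj_memD(2)[OF that(1) ti[OF b]] by simp
    next
      show "inj_on \<sigma> {1..m}"
      proof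
        fix x y assume xy: "x \<in> {1..m}" "y \<in> {1..m}" "\<sigma> x = \<sigma> y"
        then have "\<tau> (the_inv_into {1..m} \<rho> x) = \<tau> (the_inv_into {1..m} \<rho> y)" unfolding \<sigma>_def by simp
        then have "the_inv_into {1..m} \<rho> x = the_inv_into {1..m} \<rho> y"
          using inj_onD[OF Inj_memD(3)[OF that(1)] _ ti[OF xy(1)] ti[OF xy(2)]] by blast
        then have "\<rho> (the_inv_into {1..m} \<rho> x) = \<rho> (the_inv_into {1..m} \<rho> y)" by simp
        then show "x = y" using ti2[OF xy(1)] ti2[OF xy(2)] by simp
      qed
    qed
    then have "\<sigma> \<in> {\<sigma>\<in>Inj m. P (?\<phi> \<sigma>)}" using ph that(2) by simp
    then have "?\<phi> \<sigma> \<in> ?\<phi> ` {\<sigma>\<in>Inj m. P (?\<phi> \<sigma>)}" by (rule imageI)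
    then show ?thesis using ph by simp
  qed
  have eq: "?\<phi> ` {\<sigma>\<in>Inj m. P (?\<phi> \<sigma>)} = {\<sigma>\<in>Inj m. P \<sigma>}"
  proof (rule equalityI)
    show "?\<phi> ` {\<sigma>\<in>Inj m. P (?\<phi> \<sigma>)} \<subseteq> {\<sigma>\<in>Inj m. P \<sigma>}"
      by (rule image_subsetI) (blast intro: mapI)
    show "{\<sigma>\<in>Inj m. P \<sigma>} \<subseteq> ?\<phi> ` {\<sigma>\<in>Inj m. P (?\<phi> \<sigma>)}"
    proof
      fix \<tau> assume "\<tau> \<in> {\<sigma>\<in>Inj m. P \<sigma>}"
      then have "\<tau> \<in> Inj m" "P \<tau>" by simp_all
      then show "\<tau> \<in> ?\<phi> ` {\<sigma>\<in>Inj m. P (?\<phi> \<sigma>)}" by (rule surj)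
    qed
  qed
  have ii: "inj_on ?\<phi> {\<sigma>\<in>Inj m. P (?\<phi> \<sigma>)}" using injphi by (rule inj_on_subset) auto
  have "card (?\<phi> ` {\<sigma>\<in>Inj m. P (?\<phi> \<sigma>)}) = card {\<sigma>\<in>Inj m. P (?\<phi> \<sigma>)}" by (rule card_image[OF ii])
  then show ?thesis unfolding eq by simp
qed

lemma Bser_T:
  assumes gf: "goodS (Omega X I {1..m}) f" and bb: "bij_betw \<rho> {1..m} {1..m}"
  shows "Bser X I m (T X I m \<rho> f) = Bser X I m f"
proof
  fix l
  have inj\<rho>: "inj_on \<rho> {1..m}" and im: "\<rho>`{1..m} = {1..m}" using bb by (auto simp: bij_betw_def)
  have key: "(\<sigma>`{1..m}, T X I m \<sigma> (T X I m \<rho> f)) =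
        ((restrict (\<sigma> \<circ> \<rho>) {1..m})`{1..m}, T X I m (restrict (\<sigma> \<circ> \<rho>) {1..m}) f)" if "\<sigma> \<in> Inj m" for \<sigma>
  proof -
    have iis: "inj_on \<sigma> {1..m}" using that by (simp add: Inj_def)
    have injc: "inj_on (\<sigma> \<circ> \<rho>) {1..m}" using comp_inj_on[OF inj\<rho>] iis im by simp
    have "T X I m \<sigma> (T X I m \<rho> f) = T X I m (\<sigma> \<circ> \<rho>) f"
      using T_T[OF gf inj\<rho> _ iis] im by simp
    also have "\<dots> = T X I m (restrict (\<sigma> \<circ> \<rho>) {1..m}) f"
      by (rule T_cong[OF gf injc]) simp
    finally have "T X I m \<sigma> (T X I m \<rho> f) = T X I m (restrict (\<sigma> \<circ> \<rho>) {1..m}) f" .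
    moreover have "(restrict (\<sigma> \<circ> \<rho>) {1..m})`{1..m} = \<sigma>`{1..m}"
      using im by (metis image_comp image_restrict_eq)
    ultimately show ?thesis by simp
  qed
  have "{\<sigma>\<in>Inj m. (\<sigma>`{1..m}, T X I m \<sigma> (T X I m \<rho> f)) = l} =
        {\<sigma>\<in>Inj m. (\<lambda>\<tau>. (\<tau>`{1..m}, T X I m \<tau> f) = l) (restrict (\<sigma> \<circ> \<rho>) {1..m})}"
  proof (rule Collect_cong)
    fix \<sigma> show "(\<sigma> \<in> Inj m \<and> (\<sigma>`{1..m}, T X I m \<sigma> (T X I m \<rho> f)) = l) =
      (\<sigma> \<in> Inj m \<and> (\<lambda>\<tau>. (\<tau>`{1..m}, T X I m \<tau> f) = l) (restrict (\<sigma> \<circ> \<rho>) {1..m}))"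
      by (cases "\<sigma> \<in> Inj m") (simp_all only: key simp_thms)
  qed
  then show "Bser X I m (T X I m \<rho> f) l = Bser X I m f l"
    unfolding Bser_eq using Inj_reparam[OF bb, of "\<lambda>\<tau>. (\<tau>`{1..m}, T X I m \<tau> f) = l"] by simp
qed

lemma Bser_cls:
  assumes adm: "admissible X I G" and gf: "goodS (Omega X I {1..m}) f" and x: "x \<in> cls I m f"
  shows "Bser X I m x = Bser X I m f"
proof -
  have "\<exists>\<kappa>. x = \<kappa> \<circ> f \<circ> inv \<kappa> \<and> \<kappa> \<in> Kn I m" using x unfolding cls_def by (rule CollectD)
  then obtain \<kappa> where \<kappa>: "x = \<kappa> \<circ> f \<circ> inv \<kappa>" "\<kappa> \<in> Kn I m" by (elim exE conjE)
  from Kn_T[OF adm gf \<kappa>(2)] obtain \<rho> where \<rho>: "bij_betw \<rho> {1..m} {1..m}" "\<kappa> \<circ> f \<circ> inv \<kappa> = T X I m \<rho> f"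
    by (elim exE conjE)
  have "x = T X I m \<rho> f" using \<kappa>(1) \<rho>(2) by (rule trans)
  then show ?thesis using Bser_T[OF gf \<rho>(1)] by (simp only:)
qed

lemma self_cls:
  fixes f :: "('x,'i) pt \<Rightarrow> ('x,'i) pt"
  shows "f \<in> cls I m f"
proof -
  have "id \<in> S_inf" by (simp add: S_inf_def)
  moreover have li: "liftS I id = (id :: ('x,'i) pt \<Rightarrow> ('x,'i) pt)" by (rule ext, case_tac x rule: pt_cases) auto
  ultimately have "(id :: ('x,'i) pt \<Rightarrow> ('x,'i) pt) \<in> Kn I m" unfolding Kn_def by (intro image_eqI[of _ _ id]) auto
  then show ?thesis unfolding cls_def by (intro CollectI exI[of _ id]) simp
qed

lemma Bcls_cls:
  assumes adm: "admissible X I G" and gf: "goodS (Omega X I {1..m}) f"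
  shows "Bcls X I m (cls I m f) = Bser X I m f"
proof -
  have "(SOME x. x \<in> cls I m f) \<in> cls I m f" by (rule someI[of _ f]) (rule self_cls)
  then show ?thesis unfolding Bcls_def by (rule Bser_cls[OF adm gf])
qed



definition Lmap :: "nat \<Rightarrow> nat \<Rightarrow> (nat \<Rightarrow> nat) \<Rightarrow> (nat \<Rightarrow> nat) \<Rightarrow> (nat \<rightharpoonup> nat)" where
  "Lmap n k \<sigma> \<tau> = pb_inv (pb_of n \<sigma>) \<circ>\<^sub>m pb_of k \<tau>"

lemma ran_pb_of: "ran (pb_of n \<sigma>) = \<sigma>`{1..n}"
  unfolding pb_of_def ran_def by (auto split: if_splits)

lemma Lmap_Some:
  assumes "inj_on \<sigma> {1..n}"
  shows "Lmap n k \<sigma> \<tau> w = Some a \<longleftrightarrow> w \<in> {1..k} \<and> a \<in> {1..n} \<and> \<tau> w = \<sigma> a"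
proof (cases "w \<in> {1..k}")
  case True
  show ?thesis
  proof (cases "\<tau> w \<in> \<sigma>`{1..n}")
    case True2: True
    then obtain b where b: "b \<in> {1..n}" "\<tau> w = \<sigma> b" by blast
    have th: "(THE w'. pb_of n \<sigma> w' = Some (\<tau> w)) = b"
    proof (rule the_equality)
      show "pb_of n \<sigma> b = Some (\<tau> w)" using b by (simp add: pb_of_def)
      fix w' assume "pb_of n \<sigma> w' = Some (\<tau> w)"
      then have "w' \<in> {1..n}" "\<sigma> w' = \<sigma> b" using b by (auto simp: pb_of_def split: if_splits)
      then show "w' = b" using b assms by (meson inj_onD)
    qed
    have "Lmap n k \<sigma> \<tau> w = Some b"
      using True True2 th unfolding Lmap_def map_comp_def pb_inv_def ran_pb_of by (simp add: pb_of_def)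
    moreover have "(a \<in> {1..n} \<and> \<tau> w = \<sigma> a) \<longleftrightarrow> a = b" using b assms by (auto dest: inj_onD)
    ultimately show ?thesis using True by auto
  next
    case False
    have "Lmap n k \<sigma> \<tau> w = None"
      using True False unfolding Lmap_def map_comp_def pb_inv_def ran_pb_of by (simp add: pb_of_def)
    then show ?thesis using False by auto
  qed
next
  case False
  then have "pb_of k \<tau> w = None" by (simp add: pb_of_def)
  then have "Lmap n k \<sigma> \<tau> w = None" unfolding Lmap_def map_comp_def by simp
  then show ?thesis using False by auto
qed

lemma map_eqI: "(\<And>w a. f w = Some a \<longleftrightarrow> g w = Some a) \<Longrightarrow> f = g"
  by (rule ext) (metis not_None_eq)

lemma Lmap_PB:
  assumes "inj_on \<sigma> {1..n}" "inj_on \<tau> {1..k}"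
  shows "Lmap n k \<sigma> \<tau> \<in> PB k n"
  unfolding PB_def
proof (intro CollectI conjI)
  show "dom (Lmap n k \<sigma> \<tau>) \<subseteq> {1..k}" using Lmap_Some[OF assms(1)] by (auto simp: dom_def)
  show "ran (Lmap n k \<sigma> \<tau>) \<subseteq> {1..n}" using Lmap_Some[OF assms(1)] by (auto simp: ran_def)
  show "inj_on (Lmap n k \<sigma> \<tau>) (dom (Lmap n k \<sigma> \<tau>))"
  proof
    fix x y assume "x \<in> dom (Lmap n k \<sigma> \<tau>)" "y \<in> dom (Lmap n k \<sigma> \<tau>)" and e: "Lmap n k \<sigma> \<tau> x = Lmap n k \<sigma> \<tau> y"
    then obtain a where "Lmap n k \<sigma> \<tau> x = Some a" by auto
    then have "x \<in> {1..k}" "y \<in> {1..k}" "\<tau> x = \<sigma> a" "\<tau> y = \<sigma> a"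
      using e Lmap_Some[OF assms(1)] by metis+
    then show "x = y" using assms(2) by (metis inj_onD)
  qed
qed

lemma finite_PB: "finite (PB k n)"
proof -
  let ?S = "{1..k} \<rightarrow>\<^sub>E (insert None (Some ` {1..n}))"
  have "finite ?S" by (intro finite_PiE) auto
  moreover have "inj_on (\<lambda>L. restrict L {1..k}) (PB k n)"
  proof
    fix L L' assume "L \<in> PB k n" "L' \<in> PB k n" and e: "restrict L {1..k} = restrict L' {1..k}"
    then have d: "dom L \<subseteq> {1..k}" "dom L' \<subseteq> {1..k}" by (auto simp: PB_def)
    show "L = L'"
    proof
      fix w show "L w = L' w"
      proof (cases "w \<in> {1..k}")
        case True then show ?thesis using fun_cong[OF e, of w] by simp
      next
        case False
        then have "w \<notin> dom L" "w \<notin> dom L'" using d by blast+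
        then show ?thesis by (simp add: domIff)
      qed
    qed
  qed
  moreover have "(\<lambda>L. restrict L {1..k}) ` PB k n \<subseteq> ?S"
  proof
    fix x assume "x \<in> (\<lambda>L. restrict L {1..k}) ` PB k n"
    then obtain L where L: "L \<in> PB k n" "x = restrict L {1..k}" by blast
    have "L w \<in> insert None (Some ` {1..n})" for w
    proof (cases "L w")
      case (Some a) then have "a \<in> ran L" by (auto simp: ran_def)
      then have "a \<in> {1..n}" using L(1) by (auto simp: PB_def)
      then show ?thesis using Some by simp
    qed simp
    then show "x \<in> ?S" using L(2) by (auto simp: PiE_iff)
  qed
  ultimately show ?thesis using finite_imageD finite_subset by metis
qed

lemma rk_le:
  assumes "L \<in> PB k n" shows "rk L \<le> k" "rk L \<le> n"
proof -
  have d: "dom L \<subseteq> {1..k}" "ran L \<subseteq> {1..n}" "inj_on L (dom L)" using assms by (auto simp: PB_def)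
  show "rk L \<le> k" unfolding rk_def using card_mono[OF _ d(1)] by simp
  have "card (dom L) = card ((\<lambda>w. the (L w)) ` dom L)"
  proof (rule card_image[symmetric])
    show "inj_on (\<lambda>w. the (L w)) (dom L)"
      using d(3) by (auto simp: inj_on_def dom_def)
  qed
  also have "(\<lambda>w. the (L w)) ` dom L \<subseteq> {1..n}" using d(2) by (auto simp: ran_def dom_def)
  then have "card ((\<lambda>w. the (L w)) ` dom L) \<le> n" using card_mono[of "{1..n}"] by fastforce
  finally show "rk L \<le> n" unfolding rk_def .
qed



lemma exists_st:
  assumes L: "L \<in> PB k n" and m: "m = n + k - rk L"
  shows "\<exists>\<sigma>0 \<tau>0. \<sigma>0 \<in> {1..n} \<rightarrow>\<^sub>E {1..m} \<and> inj_on \<sigma>0 {1..n} \<and>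
            \<tau>0 \<in> {1..k} \<rightarrow>\<^sub>E {1..m} \<and> inj_on \<tau>0 {1..k} \<and> Lmap n k \<sigma>0 \<tau>0 = L"
proof -
  have d: "dom L \<subseteq> {1..k}" "ran L \<subseteq> {1..n}" "inj_on L (dom L)" using L by (auto simp: PB_def)
  have rk: "rk L \<le> k" "rk L \<le> n" using rk_le[OF L] by auto
  define C where "C = {1..k} - dom L"
  have cC: "card C = k - rk L" unfolding C_def rk_def using d(1) by (simp add: card_Diff_subset finite_subset)
  have cN: "card {n+1..m} = k - rk L" using m rk by simp
  obtain \<phi> where \<phi>: "bij_betw \<phi> C {n+1..m}"
    using finite_same_card_bij[of C "{n+1..m}"] cC cN C_def by auto
  define \<sigma>0 where "\<sigma>0 = restrict id {1..n}"
  define \<tau>0 where "\<tau>0 = restrict (\<lambda>w. if w \<in> dom L then the (L w) else \<phi> w) {1..k}"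
  have Lin: "the (L w) \<in> {1..n}" if "w \<in> dom L" for w using that d(2) by (auto simp: ran_def dom_def)
  have \<phi>in: "\<phi> w \<in> {n+1..m}" if "w \<in> C" for w using \<phi> that by (auto simp: bij_betw_def)
  have s1: "\<sigma>0 \<in> {1..n} \<rightarrow>\<^sub>E {1..m}" using m rk unfolding \<sigma>0_def by auto
  have s2: "inj_on \<sigma>0 {1..n}" unfolding \<sigma>0_def by (simp add: inj_on_def)
  have t1: "\<tau>0 \<in> {1..k} \<rightarrow>\<^sub>E {1..m}"
  proof -
    have "\<tau>0 w \<in> {1..m}" if "w \<in> {1..k}" for w
    proof (cases "w \<in> dom L")
      case True then show ?thesis using Lin[OF True] m rk that unfolding \<tau>0_def by auto
    next
      case False then have "w \<in> C" using that C_def by auto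
      then have "\<phi> w \<in> {n+1..m}" using \<phi>in by blast
      then show ?thesis using False that unfolding \<tau>0_def by auto
    qed
    then show ?thesis unfolding \<tau>0_def by (auto simp: PiE_iff)
  qed
  have t2: "inj_on \<tau>0 {1..k}"
  proof
    fix x y assume xy: "x \<in> {1..k}" "y \<in> {1..k}" "\<tau>0 x = \<tau>0 y"
    show "x = y"
    proof (cases "x \<in> dom L"; cases "y \<in> dom L")
      assume a: "x \<in> dom L" "y \<in> dom L"
      then have "the (L x) = the (L y)" using xy unfolding \<tau>0_def by simp
      then have "L x = L y" using a by (auto simp: dom_def)
      then show ?thesis using d(3) a by (meson inj_onD)
    next
      assume a: "x \<in> dom L" "y \<notin> dom L"
      then have "y \<in> C" using xy C_def by auto
      then have "\<phi> y \<in> {n+1..m}" using \<phi>in by blast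
      moreover have "the (L x) \<in> {1..n}" using Lin[OF a(1)] .
      moreover have "the (L x) = \<phi> y" using xy a unfolding \<tau>0_def by simp
      ultimately show ?thesis by simp
    next
      assume a: "x \<notin> dom L" "y \<in> dom L"
      then have "x \<in> C" using xy C_def by auto
      then have "\<phi> x \<in> {n+1..m}" using \<phi>in by blast
      moreover have "the (L y) \<in> {1..n}" using Lin[OF a(2)] .
      moreover have "\<phi> x = the (L y)" using xy a unfolding \<tau>0_def by simp
      ultimately show ?thesis by simp
    next
      assume a: "x \<notin> dom L" "y \<notin> dom L"
      then have "x \<in> C" "y \<in> C" using xy C_def by auto
      moreover have "\<phi> x = \<phi> y" using xy a unfolding \<tau>0_def by simp
      ultimately show ?thesis using \<phi> by (meson bij_betw_def inj_onD)
    qed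
  qed
  have t3: "Lmap n k \<sigma>0 \<tau>0 = L"
  proof (rule map_eqI)
    fix w a
    show "Lmap n k \<sigma>0 \<tau>0 w = Some a \<longleftrightarrow> L w = Some a"
    proof (cases "w \<in> {1..k}")
      case True
      show ?thesis
      proof (cases "w \<in> dom L")
        case True2: True
        then obtain b where b: "L w = Some b" by auto
        then have "b \<in> {1..n}" using Lin[OF True2] by simp
        then show ?thesis using Lmap_Some[OF s2] True True2 b unfolding \<tau>0_def \<sigma>0_def by auto
      next
        case False
        then have "w \<in> C" using True C_def by auto
        then have "\<phi> w \<in> {n+1..m}" using \<phi>in by blast
        then have "\<tau>0 w \<notin> {1..n}" using False True unfolding \<tau>0_def by auto
        then show ?thesis using Lmap_Some[OF s2] False True unfolding \<sigma>0_def by (auto simp: dom_def)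
      qed
    next
      case False
      then have "L w = None" using d(1) by (auto simp: dom_def)
      then show ?thesis using Lmap_Some[OF s2] False by auto
    qed
  qed
  show ?thesis using s1 s2 t1 t2 t3 by blast
qed

lemma st_union:
  assumes s1: "\<sigma>0 \<in> {1..n} \<rightarrow>\<^sub>E {1..m}" and s2: "inj_on \<sigma>0 {1..n}"
    and t1: "\<tau>0 \<in> {1..k} \<rightarrow>\<^sub>E {1..m}" and t2: "inj_on \<tau>0 {1..k}"
    and L: "Lmap n k \<sigma>0 \<tau>0 = L" and m: "m = n + k - rk L"
  shows "\<sigma>0`{1..n} \<union> \<tau>0`{1..k} = {1..m}"
proof -
  have dL: "dom L = {w\<in>{1..k}. \<tau>0 w \<in> \<sigma>0`{1..n}}"
    using Lmap_Some[OF s2] L by (auto simp: dom_def)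
  have "\<tau>0 ` dom L = \<sigma>0`{1..n} \<inter> \<tau>0`{1..k}"
  proof
    show "\<tau>0 ` dom L \<subseteq> \<sigma>0`{1..n} \<inter> \<tau>0`{1..k}" using dL by auto
    show "\<sigma>0`{1..n} \<inter> \<tau>0`{1..k} \<subseteq> \<tau>0 ` dom L"
    proof
      fix x assume x: "x \<in> \<sigma>0`{1..n} \<inter> \<tau>0`{1..k}"
      then obtain b where b: "b \<in> {1..k}" "x = \<tau>0 b" by auto
      then have "b \<in> dom L" using x dL by auto
      then show "x \<in> \<tau>0 ` dom L" using b by blast
    qed
  qed
  moreover have "card (\<tau>0 ` dom L) = rk L" unfolding rk_def
    using card_image inj_on_subset[OF t2] dL by (metis (no_types, lifting) mem_Collect_eq subsetI)
  ultimately have ci: "card (\<sigma>0`{1..n} \<inter> \<tau>0`{1..k}) = rk L" by simp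
  have cs: "card (\<sigma>0`{1..n}) = n" "card (\<tau>0`{1..k}) = k" using card_image[OF s2] card_image[OF t2] by simp_all
  have "n + k = card (\<sigma>0`{1..n} \<union> \<tau>0`{1..k}) + rk L" using card_Un_Int[of "\<sigma>0`{1..n}" "\<tau>0`{1..k}"] ci cs by simp
  then have cu: "card (\<sigma>0`{1..n} \<union> \<tau>0`{1..k}) = m" using m by simp
  have sub: "\<sigma>0`{1..n} \<union> \<tau>0`{1..k} \<subseteq> {1..m}" using s1 t1 by (auto simp: PiE_iff)
  show ?thesis using card_subset_eq[OF _ sub] cu by simp
qed



lemma comp_in_Inj:
  assumes "\<rho> \<in> Inj m" "\<sigma>0 \<in> {1..n} \<rightarrow>\<^sub>E {1..m}" "inj_on \<sigma>0 {1..n}"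
  shows "restrict (\<rho> \<circ> \<sigma>0) {1..n} \<in> Inj n"
proof -
  have sub: "\<sigma>0`{1..n} \<subseteq> {1..m}" using assms(2) by (auto simp: PiE_iff)
  have r: "inj_on \<rho> {1..m}" using assms(1) by (rule Inj_memD(3))
  have i2: "inj_on (\<rho> \<circ> \<sigma>0) {1..n}"
    using comp_inj_on[OF assms(3) inj_on_subset[OF r sub]] .
  show ?thesis
  proof (rule Inj_memI)
    show "restrict (\<rho> \<circ> \<sigma>0) {1..n} \<in> extensional {1..n}" by (rule restrict_extensional)
  next
    fix a assume a: "a \<in> {1..n}"
    have e: "restrict (\<rho> \<circ> \<sigma>0) {1..n} a = \<rho> (\<sigma>0 a)" using a by (simp only: restrict_apply' comp_apply)
    have "\<sigma>0 a \<in> {1..m}" using sub a by blast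
    then show "restrict (\<rho> \<circ> \<sigma>0) {1..n} a \<in> {1..}" unfolding e by (rule Inj_memD(2)[OF assms(1)])
  next
    show "inj_on (restrict (\<rho> \<circ> \<sigma>0) {1..n}) {1..n}"
    proof (rule iffD2[OF inj_on_cong i2])
      fix a assume "a \<in> {1..n}"
      then show "restrict (\<rho> \<circ> \<sigma>0) {1..n} a = (\<rho> \<circ> \<sigma>0) a" by (rule restrict_apply')
    qed
  qed
qed

lemma T_restrict_comp:
  assumes g: "goodS (Omega X I {1..n}) g" and s: "inj_on \<sigma>0 {1..n}" "\<sigma>0`{1..n} \<subseteq> {1..m}"
    and r: "inj_on \<rho> {1..m}"
  shows "T X I n (restrict (\<rho> \<circ> \<sigma>0) {1..n}) g = T X I m \<rho> (T X I n \<sigma>0 g)"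
proof -
  have injc: "inj_on (\<rho> \<circ> \<sigma>0) {1..n}" using comp_inj_on[OF s(1) inj_on_subset[OF r s(2)]] .
  have "T X I n (restrict (\<rho> \<circ> \<sigma>0) {1..n}) g = T X I n (\<rho> \<circ> \<sigma>0) g"
    by (rule T_cong[OF g injc, symmetric]) simp
  also have "\<dots> = T X I m \<rho> (T X I n \<sigma>0 g)" by (rule T_T[OF g s r, symmetric])
  finally show ?thesis .
qed

lemma fiber_L:
  assumes g: "goodS (Omega X I {1..n}) g" and h: "goodS (Omega X I {1..k}) h"
    and s1: "\<sigma>0 \<in> {1..n} \<rightarrow>\<^sub>E {1..m}" and s2: "inj_on \<sigma>0 {1..n}"
    and t1: "\<tau>0 \<in> {1..k} \<rightarrow>\<^sub>E {1..m}" and t2: "inj_on \<tau>0 {1..k}"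
    and L: "Lmap n k \<sigma>0 \<tau>0 = L" and m: "m = n + k - rk L"
    and f: "f = T X I n \<sigma>0 g \<circ> T X I k \<tau>0 h"
  shows "card {(\<sigma>,\<tau>). \<sigma> \<in> Inj n \<and> \<tau> \<in> Inj k \<and> \<sigma>`{1..n} \<union> \<tau>`{1..k} = N \<and>
               T X I n \<sigma> g \<circ> T X I k \<tau> h = \<nu> \<and> Lmap n k \<sigma> \<tau> = L}
       = card {\<rho>\<in>Inj m. (\<rho>`{1..m}, T X I m \<rho> f) = (N,\<nu>)}"
    (is "card ?S = card ?R")
proof -
  have U: "\<sigma>0`{1..n} \<union> \<tau>0`{1..k} = {1..m}" by (rule st_union[OF s1 s2 t1 t2 L m])
  have subs: "\<sigma>0`{1..n} \<subseteq> {1..m}" "\<tau>0`{1..k} \<subseteq> {1..m}" using U by auto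
  have gs: "goodS (Omega X I {1..m}) (T X I n \<sigma>0 g)"
    using goodS_mono[OF goodS_T[OF g s2] Omega_mono[OF subs(1)]] .
  have ht: "goodS (Omega X I {1..m}) (T X I k \<tau>0 h)"
    using goodS_mono[OF goodS_T[OF h t2] Omega_mono[OF subs(2)]] .
  define \<psi> where "\<psi> \<rho> = (restrict (\<rho> \<circ> \<sigma>0) {1..n}, restrict (\<rho> \<circ> \<tau>0) {1..k})" for \<rho> :: "nat \<Rightarrow> nat"
  have Tf: "T X I m \<rho> f = T X I n (fst (\<psi> \<rho>)) g \<circ> T X I k (snd (\<psi> \<rho>)) h" if "inj_on \<rho> {1..m}" for \<rho>
    using T_comp[OF gs ht that] T_restrict_comp[OF g s2 subs(1) that] T_restrict_comp[OF h t2 subs(2) that]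
    unfolding f \<psi>_def by simp
  have Lpsi: "Lmap n k (fst (\<psi> \<rho>)) (snd (\<psi> \<rho>)) = L" if "\<rho> \<in> Inj m" for \<rho>
  proof -
    have r: "inj_on \<rho> {1..m}" using that by (simp add: Inj_def)
    have i1: "inj_on (fst (\<psi> \<rho>)) {1..n}" using comp_in_Inj[OF that s1 s2] by (simp add: \<psi>_def Inj_def)
    show ?thesis
    proof (rule map_eqI)
      fix w a
      have "(w \<in> {1..k} \<and> a \<in> {1..n} \<and> \<rho> (\<tau>0 w) = \<rho> (\<sigma>0 a)) \<longleftrightarrow> (w \<in> {1..k} \<and> a \<in> {1..n} \<and> \<tau>0 w = \<sigma>0 a)"
      proof -
        have "\<tau>0 w = \<sigma>0 a" if "w \<in> {1..k}" "a \<in> {1..n}" "\<rho> (\<tau>0 w) = \<rho> (\<sigma>0 a)"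
        proof -
          have "\<tau>0 w \<in> {1..m}" "\<sigma>0 a \<in> {1..m}" using that subs by blast+
          then show ?thesis using inj_onD[OF r that(3)] by blast
        qed
        then show ?thesis by metis
      qed
      then show "Lmap n k (fst (\<psi> \<rho>)) (snd (\<psi> \<rho>)) w = Some a \<longleftrightarrow> L w = Some a"
        using Lmap_Some[OF i1] Lmap_Some[OF s2] L unfolding \<psi>_def by auto
    qed
  qed
  have into: "\<psi> \<rho> \<in> ?S" if "\<rho> \<in> ?R" for \<rho>
  proof -
    have \<rho>: "\<rho> \<in> Inj m" "\<rho>`{1..m} = N" "T X I m \<rho> f = \<nu>" using that by auto
    have r: "inj_on \<rho> {1..m}" using \<rho>(1) by (simp add: Inj_def)
    have "fst (\<psi> \<rho>) ` {1..n} \<union> snd (\<psi> \<rho>) ` {1..k} = \<rho> ` (\<sigma>0`{1..n} \<union> \<tau>0`{1..k})"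
      unfolding \<psi>_def by (auto simp: image_iff)
    then have un: "fst (\<psi> \<rho>) ` {1..n} \<union> snd (\<psi> \<rho>) ` {1..k} = N" using U \<rho>(2) by simp
    show ?thesis using comp_in_Inj[OF \<rho>(1) s1 s2] comp_in_Inj[OF \<rho>(1) t1 t2] un Tf[OF r] \<rho>(3) Lpsi[OF \<rho>(1)]
      by (simp add: \<psi>_def)
  qed
  have injpsi: "inj_on \<psi> ?R"
  proof
    fix \<rho> \<rho>' assume a: "\<rho> \<in> ?R" "\<rho>' \<in> ?R" and e: "\<psi> \<rho> = \<psi> \<rho>'"
    show "\<rho> = \<rho>'"
    proof (rule PiE_ext)
      show "\<rho> \<in> {1..m} \<rightarrow>\<^sub>E {1..}" "\<rho>' \<in> {1..m} \<rightarrow>\<^sub>E {1..}" using a by (auto simp: Inj_def)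
      fix x assume "x \<in> {1..m}"
      then have "x \<in> \<sigma>0`{1..n} \<or> x \<in> \<tau>0`{1..k}" using U by auto
      then show "\<rho> x = \<rho>' x"
      proof
        assume "x \<in> \<sigma>0`{1..n}"
        then obtain b where "b \<in> {1..n}" "x = \<sigma>0 b" by auto
        then show ?thesis using fun_cong[OF arg_cong[OF e, of fst], of b] by (simp add: \<psi>_def)
      next
        assume "x \<in> \<tau>0`{1..k}"
        then obtain b where "b \<in> {1..k}" "x = \<tau>0 b" by auto
        then show ?thesis using fun_cong[OF arg_cong[OF e, of snd], of b] by (simp add: \<psi>_def)
      qed
    qed
  qed
  have onto: "p \<in> \<psi> ` ?R" if "p \<in> ?S" for p
  proof -
    obtain \<sigma> \<tau> where p: "p = (\<sigma>,\<tau>)" by (cases p)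
    have st: "\<sigma> \<in> Inj n" "\<tau> \<in> Inj k" "\<sigma>`{1..n} \<union> \<tau>`{1..k} = N"
      "T X I n \<sigma> g \<circ> T X I k \<tau> h = \<nu>" "Lmap n k \<sigma> \<tau> = L" using that p by auto
    have iis: "inj_on \<sigma> {1..n}" "inj_on \<tau> {1..k}" using st by (auto simp: Inj_def)
    define \<rho> where "\<rho> = restrict (\<lambda>x. if x \<in> \<sigma>0`{1..n} then \<sigma> (the_inv_into {1..n} \<sigma>0 x)
                                        else \<tau> (the_inv_into {1..k} \<tau>0 x)) {1..m}"
    have r1: "\<rho> (\<sigma>0 a) = \<sigma> a" if "a \<in> {1..n}" for a
    proof -
      have m1: "\<sigma>0 a \<in> {1..m}" using that subs by blast
      have m2: "\<sigma>0 a \<in> \<sigma>0`{1..n}" using that by blast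
      have "the_inv_into {1..n} \<sigma>0 (\<sigma>0 a) = a" using the_inv_into_f_f[OF s2 that] .
      then show ?thesis unfolding \<rho>_def using m1 m2 by (simp only: restrict_apply' if_True)
    qed
    have cross: "\<tau>0 b = \<sigma>0 a" if "a \<in> {1..n}" "b \<in> {1..k}" "\<tau> b = \<sigma> a" for a b
    proof -
      have "Lmap n k \<sigma> \<tau> b = Some a" using Lmap_Some[OF iis(1)] that by simp
      then have "Lmap n k \<sigma>0 \<tau>0 b = Some a" using st(5) L by simp
      then show ?thesis using Lmap_Some[OF s2] by simp
    qed
    have cross2: "\<tau> b = \<sigma> a" if "a \<in> {1..n}" "b \<in> {1..k}" "\<tau>0 b = \<sigma>0 a" for a b
    proof -
      have "Lmap n k \<sigma>0 \<tau>0 b = Some a" using Lmap_Some[OF s2] that by simp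
      then have "Lmap n k \<sigma> \<tau> b = Some a" using st(5) L by simp
      then show ?thesis using Lmap_Some[OF iis(1)] by simp
    qed
    have r2: "\<rho> (\<tau>0 b) = \<tau> b" if "b \<in> {1..k}" for b
    proof (cases "\<tau>0 b \<in> \<sigma>0`{1..n}")
      case True
      then obtain a where a: "a \<in> {1..n}" "\<tau>0 b = \<sigma>0 a" by auto
      then show ?thesis using r1[OF a(1)] cross2[OF a(1) that a(2)] by simp
    next
      case False
      have m1: "\<tau>0 b \<in> {1..m}" using that subs by blast
      have "the_inv_into {1..k} \<tau>0 (\<tau>0 b) = b" using the_inv_into_f_f[OF t2 that] .
      then show ?thesis unfolding \<rho>_def using m1 False by (simp only: restrict_apply' if_False)
    qed
    have rin: "\<rho> \<in> Inj m"
    proof -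
      have "\<rho> x \<in> {1..}" if "x \<in> {1..m}" for x
      proof -
        have "x \<in> \<sigma>0`{1..n} \<or> x \<in> \<tau>0`{1..k}" using U that by auto
        then show ?thesis using r1 r2 st(1,2) unfolding Inj_def by (auto simp: PiE_iff)
      qed
      moreover have "inj_on \<rho> {1..m}"
      proof
        fix x y assume xy: "x \<in> {1..m}" "y \<in> {1..m}" "\<rho> x = \<rho> y"
        have x: "x \<in> \<sigma>0`{1..n} \<or> x \<in> \<tau>0`{1..k}" and y: "y \<in> \<sigma>0`{1..n} \<or> y \<in> \<tau>0`{1..k}" using U xy by auto
        show "x = y"
        proof (cases "x \<in> \<sigma>0`{1..n}"; cases "y \<in> \<sigma>0`{1..n}")
          assume "x \<in> \<sigma>0`{1..n}" "y \<in> \<sigma>0`{1..n}"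
          then obtain a a' where "a \<in> {1..n}" "a' \<in> {1..n}" "x = \<sigma>0 a" "y = \<sigma>0 a'" by auto
          then show ?thesis using xy(3) r1 iis(1) by (metis inj_onD)
        next
          assume "x \<in> \<sigma>0`{1..n}" "y \<notin> \<sigma>0`{1..n}"
          then obtain a b where ab: "a \<in> {1..n}" "b \<in> {1..k}" "x = \<sigma>0 a" "y = \<tau>0 b" using y by auto
          then have "\<tau> b = \<sigma> a" using xy(3) r1 r2 by simp
          then show ?thesis using cross[OF ab(1,2)] ab by simp
        next
          assume "x \<notin> \<sigma>0`{1..n}" "y \<in> \<sigma>0`{1..n}"
          then obtain a b where ab: "a \<in> {1..n}" "b \<in> {1..k}" "y = \<sigma>0 a" "x = \<tau>0 b" using x by auto
          then have "\<tau> b = \<sigma> a" using xy(3) r1 r2 by simp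
          then show ?thesis using cross[OF ab(1,2)] ab by simp
        next
          assume "x \<notin> \<sigma>0`{1..n}" "y \<notin> \<sigma>0`{1..n}"
          then obtain b b' where "b \<in> {1..k}" "b' \<in> {1..k}" "x = \<tau>0 b" "y = \<tau>0 b'" using x y by auto
          then show ?thesis using xy(3) r2 iis(2) by (metis inj_onD)
        qed
      qed
      moreover have "\<rho> \<in> extensional {1..m}" unfolding \<rho>_def by simp
      ultimately show ?thesis unfolding Inj_def by (auto simp: PiE_iff)
    qed
    have r: "inj_on \<rho> {1..m}" using rin by (simp add: Inj_def)
    have ps: "\<psi> \<rho> = (\<sigma>, \<tau>)"
    proof -
      have "restrict (\<rho> \<circ> \<sigma>0) {1..n} = \<sigma>"
        by (rule PiE_ext[of _ "{1..n}" "\<lambda>_. {1..}"]) (use st(1) r1 in \<open>auto simp: Inj_def PiE_iff\<close>)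
      moreover have "restrict (\<rho> \<circ> \<tau>0) {1..k} = \<tau>"
        by (rule PiE_ext[of _ "{1..k}" "\<lambda>_. {1..}"]) (use st(2) r2 in \<open>auto simp: Inj_def PiE_iff\<close>)
      ultimately show ?thesis by (simp add: \<psi>_def)
    qed
    have "\<rho>`{1..m} = \<rho>`\<sigma>0`{1..n} \<union> \<rho>`\<tau>0`{1..k}" using U by (metis image_Un)
    also have "\<dots> = \<sigma>`{1..n} \<union> \<tau>`{1..k}"
    proof -
      have e1: "\<rho>`\<sigma>0`{1..n} = \<sigma>`{1..n}"
        unfolding image_comp by (rule image_cong) (simp_all add: r1)
      have e2: "\<rho>`\<tau>0`{1..k} = \<tau>`{1..k}"
        unfolding image_comp by (rule image_cong) (simp_all add: r2)
      show ?thesis using e1 e2 by simp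
    qed
    finally have "\<rho>`{1..m} = N" using st(3) by simp
    moreover have "T X I m \<rho> f = \<nu>" using Tf[OF r] ps st(4) by simp
    ultimately have "\<rho> \<in> ?R" using rin by simp
    then have "\<psi> \<rho> \<in> \<psi> ` ?R" by (rule imageI)
    then show ?thesis using ps p by simp
  qed
  have "\<psi> ` ?R = ?S"
  proof (rule equalityI)
    show "\<psi> ` ?R \<subseteq> ?S" by (rule image_subsetI) (rule into)
    show "?S \<subseteq> \<psi> ` ?R" by (rule subsetI) (rule onto)
  qed
  then show ?thesis using card_image[OF injpsi] by simp
qed



lemma Gn_good:
  assumes "g \<in> Gn X I G n" "admissible X I G"
  shows "goodS (Omega X I {1..n}) g"
proof -
  have g: "g \<in> G" "\<And>v. v \<notin> Omega X I {1..n} \<Longrightarrow> g v = v" using assms(1) by (auto simp: Gn_def Vn_def)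
  have "bij g" using g(1) assms(2) unfolding admissible_def fperm_def by blast
  then have ig: "inj g" by (simp add: bij_def)
  have "g v \<in> Omega X I {1..n}" if "v \<in> Omega X I {1..n}" for v
  proof (rule ccontr)
    assume "g v \<notin> Omega X I {1..n}"
    then have "g (g v) = g v" using g(2) by blast
    then have "g v = v" using ig by (simp add: inj_eq)
    then show False using that \<open>g v \<notin> _\<close> by simp
  qed
  then show ?thesis using g(2) by (auto simp: goodS_def)
qed

lemma Bcls_rep:
  assumes adm: "admissible X I G" and c: "c \<in> quotGK X I G n" and g: "g \<in> c"
  shows "Bcls X I n c = Bser X I n g" and "goodS (Omega X I {1..n}) g"
proof -
  obtain g' where g': "g' \<in> Gn X I G n" "c = cls I n g'" using c by (auto simp: quotGK_def)
  have gg': "goodS (Omega X I {1..n}) g'" by (rule Gn_good[OF g'(1) adm])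
  have "Bcls X I n c = Bser X I n g'" using Bcls_cls[OF adm gg'] g'(2) by simp
  moreover have "Bser X I n g = Bser X I n g'" using Bser_cls[OF adm gg'] g g'(2) by simp
  ultimately show "Bcls X I n c = Bser X I n g" by simp
  have "\<exists>\<kappa>. g = \<kappa> \<circ> g' \<circ> inv \<kappa> \<and> \<kappa> \<in> Kn I n" using g unfolding g'(2) cls_def by (rule CollectD)
  then obtain \<kappa> where \<kappa>: "g = \<kappa> \<circ> g' \<circ> inv \<kappa>" "\<kappa> \<in> Kn I n" by (elim exE conjE)
  from Kn_T[OF adm gg' \<kappa>(2)] obtain \<rho> where \<rho>0: "bij_betw \<rho> {1..n} {1..n}" "\<kappa> \<circ> g' \<circ> inv \<kappa> = T X I n \<rho> g'"
    by (elim exE conjE)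
  have \<rho>: "bij_betw \<rho> {1..n} {1..n}" "g = T X I n \<rho> g'" using \<rho>0 \<kappa>(1) by simp_all
  have i: "inj_on \<rho> {1..n}" "\<rho>`{1..n} = {1..n}" using \<rho>(1) by (auto simp: bij_betw_def)
  have "goodS (Omega X I (\<rho>`{1..n})) (T X I n \<rho> g')" by (rule goodS_T[OF gg' i(1)])
  then show "goodS (Omega X I {1..n}) g" using i(2) \<rho>(2) by simp
qed

lemma finite_Inj_img: "finite {\<sigma>\<in>Inj n. \<sigma>`{1..n} = F}"
proof (cases "finite F")
  case True
  have "{\<sigma>\<in>Inj n. \<sigma>`{1..n} = F} \<subseteq> {1..n} \<rightarrow>\<^sub>E F" by (auto simp: Inj_def PiE_iff extensional_def)
  moreover have "finite ({1..n} \<rightarrow>\<^sub>E F)" using True by (intro finite_PiE) auto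
  ultimately show ?thesis by (rule finite_subset)
next
  case False
  have e: "{\<sigma>\<in>Inj n. \<sigma>`{1..n} = F} = {}"
  proof (rule ccontr)
    assume "{\<sigma>\<in>Inj n. \<sigma>`{1..n} = F} \<noteq> {}"
    then obtain \<sigma> where "\<sigma>`{1..n} = F" by blast
    then have "finite F" by blast
    then show False using False by simp
  qed
  show ?thesis unfolding e by (rule finite.emptyI)
qed

definition Sset where
  "Sset X I n k g h N \<nu> = {(\<sigma>,\<tau>). \<sigma> \<in> Inj n \<and> \<tau> \<in> Inj k \<and> \<sigma>`{1..n} \<union> \<tau>`{1..k} = N \<and>
               T X I n \<sigma> g \<circ> T X I k \<tau> h = \<nu>}"

lemma finite_Sset: "finite (Sset X I n k g h N \<nu>)"
proof (cases "finite N")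
  case True
  have "Sset X I n k g h N \<nu> \<subseteq> ({1..n} \<rightarrow>\<^sub>E N) \<times> ({1..k} \<rightarrow>\<^sub>E N)"
    by (auto simp: Sset_def Inj_def PiE_iff extensional_def)
  moreover have "finite (({1..n} \<rightarrow>\<^sub>E N) \<times> ({1..k} \<rightarrow>\<^sub>E N))" using True by (intro finite_cartesian_product finite_PiE) auto
  ultimately show ?thesis by (rule finite_subset)
next
  case False
  then have "Sset X I n k g h N \<nu> = {}" by (auto simp: Sset_def)
  then show ?thesis by simp
qed

lemma conv_Bser:
  "conv (Bser X I n g) (Bser X I k h) (N,\<nu>) = of_nat (card (Sset X I n k g h N \<nu>))"
proof -
  define A where "A p = {\<sigma>\<in>Inj n. (\<sigma>`{1..n}, T X I n \<sigma> g) = p}" for p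
  define B where "B q = {\<tau>\<in>Inj k. (\<tau>`{1..k}, T X I k \<tau> h) = q}" for q
  have fA: "finite (A p)" for p
    by (rule finite_subset[OF _ finite_Inj_img[of n "fst p"]]) (auto simp: A_def)
  have fB: "finite (B q)" for q
    by (rule finite_subset[OF _ finite_Inj_img[of k "fst q"]]) (auto simp: B_def)
  have a: "Bser X I n g p = of_nat (card (A p))" for p unfolding Bser_eq A_def ..
  have b: "Bser X I k h q = of_nat (card (B q))" for q unfolding Bser_eq B_def ..
  let ?S = "Sset X I n k g h N \<nu>"
  define \<Phi> where "\<Phi> s = ((fst s`{1..n}, T X I n (fst s) g), (snd s`{1..k}, T X I k (snd s) h))" for s
  define P where "P = {(p,q). Bser X I n g p \<noteq> 0 \<and> Bser X I k h q \<noteq> 0 \<and> fst p \<union> fst q = N \<and> snd p \<circ> snd q = \<nu>}"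
  have conv_eq: "conv (Bser X I n g) (Bser X I k h) (N,\<nu>) = (\<Sum>(p,q)\<in>P. Bser X I n g p * Bser X I k h q)"
    unfolding conv_def P_def by simp
  have P_eq: "P = {(p,q). A p \<noteq> {} \<and> B q \<noteq> {} \<and> fst p \<union> fst q = N \<and> snd p \<circ> snd q = \<nu>}"
    unfolding P_def a b using fA fB by auto
  have fib: "{s\<in>?S. \<Phi> s = x} = A (fst x) \<times> B (snd x)" if "x \<in> P" for x
  proof -
    obtain p q where x: "x = (p,q)" by (cases x)
    have PP: "fst p \<union> fst q = N" "snd p \<circ> snd q = \<nu>" using that x unfolding P_eq by auto
    show ?thesis
    proof (rule set_eqI, rule iffI)
      fix s assume "s \<in> {s\<in>?S. \<Phi> s = x}"
      then show "s \<in> A (fst x) \<times> B (snd x)" unfolding x Sset_def A_def B_def \<Phi>_def by (cases s) auto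
    next
      fix s assume s: "s \<in> A (fst x) \<times> B (snd x)"
      obtain \<sigma> \<tau> where s': "s = (\<sigma>,\<tau>)" by (cases s)
      have st: "\<sigma> \<in> Inj n" "p = (\<sigma>`{1..n}, T X I n \<sigma> g)" "\<tau> \<in> Inj k" "q = (\<tau>`{1..k}, T X I k \<tau> h)"
        using s s' x unfolding A_def B_def by auto
      then show "s \<in> {s\<in>?S. \<Phi> s = x}" using PP s' x unfolding Sset_def \<Phi>_def by auto
    qed
  qed
  have img: "\<Phi> ` ?S = P"
  proof
    show "\<Phi> ` ?S \<subseteq> P" unfolding P_eq Sset_def A_def B_def \<Phi>_def by auto
    show "P \<subseteq> \<Phi> ` ?S"
    proof
      fix x assume x: "x \<in> P"
      obtain p q where pq0: "x = (p,q)" by (cases x)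
      have "A p \<noteq> {}" "B q \<noteq> {}" using x pq0 unfolding P_eq by auto
      note pq = pq0 this
      then obtain \<sigma> \<tau> where "\<sigma> \<in> A p" "\<tau> \<in> B q" by blast
      then have "(\<sigma>,\<tau>) \<in> {s\<in>?S. \<Phi> s = x}" using fib[OF x] pq by simp
      then show "x \<in> \<Phi> ` ?S" by blast
    qed
  qed
  have fP: "finite P" using img finite_Sset by (metis finite_imageI)
  have "card ?S = (\<Sum>x\<in>P. card {s\<in>?S. \<Phi> s = x})"
    by (rule card_fib[OF finite_Sset fP]) (use img in blast)
  also have "\<dots> = (\<Sum>x\<in>P. card (A (fst x)) * card (B (snd x)))"
    by (rule sum.cong) (simp_all add: fib card_cartesian_product)
  finally have cS: "card ?S = (\<Sum>x\<in>P. card (A (fst x)) * card (B (snd x)))" .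
  have e1: "of_nat (card ?S) = (\<Sum>x\<in>P. of_nat (card (A (fst x))) * (of_nat (card (B (snd x))) :: complex))"
    by (simp only: cS of_nat_sum of_nat_mult)
  have e2: "(\<Sum>x\<in>P. of_nat (card (A (fst x))) * (of_nat (card (B (snd x))) :: complex)) = (\<Sum>(p,q)\<in>P. Bser X I n g p * Bser X I k h q)"
    by (rule sum.cong[OF refl], case_tac x) (simp only: a b prod.case fst_conv snd_conv)
  show ?thesis by (simp only: conv_eq e1 e2)
qed



lemma star_Bcls:
  assumes adm: "admissible X I G" and L: "L \<in> PB k n"
    and g: "goodS (Omega X I {1..n}) g" and h: "goodS (Omega X I {1..k}) h"
  shows "Bcls X I (n + k - rk L) (star_cls I X n k g h L) (N,\<nu>) =
         of_nat (card {s \<in> Sset X I n k g h N \<nu>. Lmap n k (fst s) (snd s) = L})"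
proof -
  define m where "m = n + k - rk L"
  define Q where "Q = (\<lambda>(\<sigma>0::nat\<Rightarrow>nat, \<tau>0::nat\<Rightarrow>nat). \<sigma>0 \<in> {1..n} \<rightarrow>\<^sub>E {1..m} \<and> inj_on \<sigma>0 {1..n} \<and>
                               \<tau>0 \<in> {1..k} \<rightarrow>\<^sub>E {1..m} \<and> inj_on \<tau>0 {1..k} \<and>
                               pb_inv (pb_of n \<sigma>0) \<circ>\<^sub>m pb_of k \<tau>0 = L)"
  obtain a b where ab: "a \<in> {1..n} \<rightarrow>\<^sub>E {1..m} \<and> inj_on a {1..n} \<and>
            b \<in> {1..k} \<rightarrow>\<^sub>E {1..m} \<and> inj_on b {1..k} \<and> Lmap n k a b = L"
    using exists_st[OF L m_def] by blast
  have "Q (a,b)" using ab unfolding Q_def Lmap_def by (simp only: prod.case)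
  then have ex: "\<exists>p. Q p" by blast
  define st where "st = (SOME p. Q p)"
  have Qst: "Q st" unfolding st_def using ex by (rule someI_ex)
  obtain \<sigma>0 \<tau>0 where stp: "st = (\<sigma>0, \<tau>0)" by (cases st)
  have s1: "\<sigma>0 \<in> {1..n} \<rightarrow>\<^sub>E {1..m}" and s2: "inj_on \<sigma>0 {1..n}"
    and t1: "\<tau>0 \<in> {1..k} \<rightarrow>\<^sub>E {1..m}" and t2: "inj_on \<tau>0 {1..k}"
    and LL: "Lmap n k \<sigma>0 \<tau>0 = L"
  proof -
    have Q': "\<sigma>0 \<in> {1..n} \<rightarrow>\<^sub>E {1..m} \<and> inj_on \<sigma>0 {1..n} \<and>
              \<tau>0 \<in> {1..k} \<rightarrow>\<^sub>E {1..m} \<and> inj_on \<tau>0 {1..k} \<and>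
              pb_inv (pb_of n \<sigma>0) \<circ>\<^sub>m pb_of k \<tau>0 = L"
      using Qst unfolding stp Q_def by (simp only: prod.case)
    then show "\<sigma>0 \<in> {1..n} \<rightarrow>\<^sub>E {1..m}" "inj_on \<sigma>0 {1..n}" "\<tau>0 \<in> {1..k} \<rightarrow>\<^sub>E {1..m}"
      "inj_on \<tau>0 {1..k}" "Lmap n k \<sigma>0 \<tau>0 = L" unfolding Lmap_def by blast+
  qed
  define f where "f = T X I n \<sigma>0 g \<circ> T X I k \<tau>0 h"
  have sc0: "star_cls I X n k g h L = cls I m (snd (conj_lb X I n (fst st) g) \<circ> snd (conj_lb X I k (snd st) h))"
    unfolding star_cls_def Let_def m_def[symmetric] Q_def[symmetric] st_def[symmetric] by (rule refl)
  have sc: "star_cls I X n k g h L = cls I m f"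
    unfolding sc0 by (simp only: stp fst_conv snd_conv f_def T_def)
  have subs: "\<sigma>0`{1..n} \<subseteq> {1..m}" "\<tau>0`{1..k} \<subseteq> {1..m}" using s1 t1 by (auto simp: PiE_iff)
  have a1: "goodS (Omega X I {1..m}) (T X I n \<sigma>0 g)"
    using goodS_mono[OF goodS_T[OF g s2] Omega_mono[OF subs(1)]] .
  have a2: "goodS (Omega X I {1..m}) (T X I k \<tau>0 h)"
    using goodS_mono[OF goodS_T[OF h t2] Omega_mono[OF subs(2)]] .
  have gf: "goodS (Omega X I {1..m}) f" unfolding f_def by (rule goodS_comp[OF a1 a2])
  have "Bcls X I m (star_cls I X n k g h L) (N,\<nu>) = Bser X I m f (N,\<nu>)"
    using Bcls_cls[OF adm gf] sc by simp
  also have "\<dots> = of_nat (card {\<rho>\<in>Inj m. (\<rho>`{1..m}, T X I m \<rho> f) = (N,\<nu>)})" by (rule Bser_eq)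
  also have "card {\<rho>\<in>Inj m. (\<rho>`{1..m}, T X I m \<rho> f) = (N,\<nu>)} =
     card {(\<sigma>,\<tau>). \<sigma> \<in> Inj n \<and> \<tau> \<in> Inj k \<and> \<sigma>`{1..n} \<union> \<tau>`{1..k} = N \<and>
               T X I n \<sigma> g \<circ> T X I k \<tau> h = \<nu> \<and> Lmap n k \<sigma> \<tau> = L}"
    by (rule fiber_L[OF g h s1 s2 t1 t2 LL m_def f_def, symmetric])
  also have "{(\<sigma>,\<tau>). \<sigma> \<in> Inj n \<and> \<tau> \<in> Inj k \<and> \<sigma>`{1..n} \<union> \<tau>`{1..k} = N \<and>
               T X I n \<sigma> g \<circ> T X I k \<tau> h = \<nu> \<and> Lmap n k \<sigma> \<tau> = L}
      = {s \<in> Sset X I n k g h N \<nu>. Lmap n k (fst s) (snd s) = L}"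
    by (rule set_eqI, case_tac x) (simp add: Sset_def)
  finally show ?thesis unfolding m_def .
qed

theorem proposition2p2:
  fixes X :: "'x set" and I :: "'i set"
    and G :: "(('x,'i) pt \<Rightarrow> ('x,'i) pt) set"
    and n k :: nat and c d :: "(('x,'i) pt \<Rightarrow> ('x,'i) pt) set"
    and g h :: "('x,'i) pt \<Rightarrow> ('x,'i) pt"
  assumes "finite I" and "countable X" and "admissible X I G"
    and "c \<in> quotGK X I G n" and "d \<in> quotGK X I G k"
    and "g \<in> c" and "h \<in> d"
  shows "conv (Bcls X I n c) (Bcls X I k d) =
         (\<lambda>l. \<Sum>L\<in>PB k n. Bcls X I (n + k - rk L) (star_cls I X n k g h L) l)"
proof
  fix l :: "('x,'i) lb"
  obtain N \<nu> where l: "l = (N,\<nu>)" by (cases l)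
  note adm = assms(3)
  have bc: "Bcls X I n c = Bser X I n g" and g: "goodS (Omega X I {1..n}) g"
    using Bcls_rep[OF adm assms(4) assms(6)] by auto
  have bd: "Bcls X I k d = Bser X I k h" and h: "goodS (Omega X I {1..k}) h"
    using Bcls_rep[OF adm assms(5) assms(7)] by auto
  have "conv (Bcls X I n c) (Bcls X I k d) l = of_nat (card (Sset X I n k g h N \<nu>))"
    unfolding bc bd l by (rule conv_Bser)
  also have "card (Sset X I n k g h N \<nu>) =
      (\<Sum>L\<in>PB k n. card {s \<in> Sset X I n k g h N \<nu>. Lmap n k (fst s) (snd s) = L})"
  proof (rule card_fib[OF finite_Sset finite_PB])
    show "(\<lambda>s. Lmap n k (fst s) (snd s)) ` Sset X I n k g h N \<nu> \<subseteq> PB k n"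
      by (auto simp: Sset_def Inj_def intro!: Lmap_PB)
  qed
  also have "of_nat (\<Sum>L\<in>PB k n. card {s \<in> Sset X I n k g h N \<nu>. Lmap n k (fst s) (snd s) = L}) =
      (\<Sum>L\<in>PB k n. (of_nat (card {s \<in> Sset X I n k g h N \<nu>. Lmap n k (fst s) (snd s) = L}) :: complex))"
    by simp
  also have "\<dots> = (\<Sum>L\<in>PB k n. Bcls X I (n + k - rk L) (star_cls I X n k g h L) l)"
    unfolding l by (rule sum.cong[OF refl], rule star_Bcls[OF adm _ g h, symmetric])
  finally show "conv (Bcls X I n c) (Bcls X I k d) l = (\<Sum>L\<in>PB k n. Bcls X I (n + k - rk L) (star_cls I X n k g h L) l)" .
qed


end
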